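(* Let $V'$ be a finite set of nodes, $k\ge 1$ an integer (number of clusters, labelled $1,\dots,k$), and $E'^{\mathrm{CL}}$ a set of unordered pairs $\{i,j\}$ of distinct nodes of $V'$ (hard cannot-link constraints). Let $H=(V',E'^{\mathrm{CL}})$ and $\Delta(H)=\max_{i\in V'}\deg_H(i)$. Suppose a feasible assignment exists, i.e. there is a map $c:V'\to\{1,\dots,k\}$ with $c(i)\neq c(j)$ for all $\{i,j\}\in E'^{\mathrm{CL}}$. Let $q$ be an integer with $q\ge \min(1+\Delta(H),k)$ (and $q\le k$), and for every $i\in V'$ let $L_i\subseteq\{1,\dots,k\}$ contain the $q$ clusters whose centers are nearest to node $i$ (possibly together with additional clusters). Then the model (R($q$)MBLP) described in the context has a feasible solution, and hence solving it yields an assignment of every node to a cluster that satisfies all hard cannot-link constraints.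
   Context: Setting: nodes $i\in V'$ have feature vectors and positive integer weights $s_i$; there are $k$ cluster centers, and $d_{il}\ge 0$ denotes the squared Euclidean distance between node $i$ and the center of cluster $l$. Besides the hard cannot-link pairs $E'^{\mathrm{CL}}$, there are sets $E'^{\mathrm{SCL}}$ and $E'^{\mathrm{SML}}$ of pairs (soft cannot-link and soft must-link constraints) with weights $w'_{ij}>0$, and a penalty $P>0$. Given the sets $L_i$, define $E''^{\mathrm{CL}}=\{\{i,j\}\in E'^{\mathrm{CL}}: L_i\cap L_j\neq\emptyset\}$, $E''^{\mathrm{SCL}}=\{\{i,j\}\in E'^{\mathrm{SCL}}: L_i\cap L_j\neq\emptyset\}$, and let $E''^{\mathrm{SML}}\subseteq E'^{\mathrm{SML}}$. The model (R($q$)MBLP) is: minimize $\sum_{i\in V'}\sum_{l\in L_i}s_i d_{il}x_{il}+P\big(\sum_{\{i,j\}\in E''^{\mathrm{SCL}}}w'_{ij}y_{ij}+\sum_{\{i,j\}\in E''^{\mathrm{SML}}}w'_{ij}z_{ij}\big)$ subject to $\sum_{l\in L_i}x_{il}=1$ for all $i\in V'$; $x_{il}+x_{jl}\le 1$ for all $\{i,j\}\in E''^{\mathrm{CL}}$, $l\in L_i\cap L_j$; $x_{il}+x_{jl}\le 1+y_{ij}$ for all $\{i,j\}\in E''^{\mathrm{SCL}}$, $l\in L_i\cap L_j$; $x_{il}-x_{jl}\le z_{ij}$ for all $\{i,j\}\in E''^{\mathrm{SML}}$, $l\in L_i\cap L_j$; $x_{il}\le z_{ij}$ for $\{i,j\}\in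 E''^{\mathrm{SML}}$, $l\in L_i\setminus L_j$; $x_{jl}\le z_{ij}$ for $\{i,j\}\in E''^{\mathrm{SML}}$, $l\in L_j\setminus L_i$; $x_{il}\in\{0,1\}$ for $i\in V'$, $l\in L_i$; $y_{ij}\ge 0$, $z_{ij}\ge 0$. A solution assigns node $i$ to the unique cluster $l\in L_i$ with $x_{il}=1$. *)

theory Defs
  imports Complex_Main
begin

definition pairs_on :: "'a set \<Rightarrow> 'a set set" where
  "pairs_on V = {{i, j} | i j. i \<in> V \<and> j \<in> V \<and> i \<noteq> j}"

definition deg :: "'a set set \<Rightarrow> 'a \<Rightarrow> nat" where
  "deg E i = card {j. {i, j} \<in> E}"

definition max_deg :: "'a set \<Rightarrow> 'a set set \<Rightarrow> nat" where
  "max_deg V E = Max (insert 0 (deg E ` V))"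

definition nearest_q :: "nat \<Rightarrow> nat \<Rightarrow> ('a \<Rightarrow> nat \<Rightarrow> real) \<Rightarrow> 'a \<Rightarrow> nat set \<Rightarrow> bool" where
  "nearest_q k q d i S \<longleftrightarrow> S \<subseteq> {1..k} \<and> card S = q \<and>
     (\<forall>l\<in>S. \<forall>l'\<in>{1..k} - S. d i l \<le> d i l')"

definition reduce_edges :: "('a \<Rightarrow> nat set) \<Rightarrow> 'a set set \<Rightarrow> 'a set set" where
  "reduce_edges L E = {e \<in> E. \<forall>i j. e = {i, j} \<longrightarrow> L i \<inter> L j \<noteq> {}}"

definition RMBLP_feasible ::
  "'a set \<Rightarrow> ('a \<Rightarrow> nat set) \<Rightarrow> 'a set set \<Rightarrow> 'a set set \<Rightarrow> 'a set set
   \<Rightarrow> ('a \<Rightarrow> nat \<Rightarrow> real) \<Rightarrow> ('a set \<Rightarrow> real) \<Rightarrow> ('a set \<Rightarrow> real) \<Rightarrow> bool" where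
  "RMBLP_feasible V L ECL ESCL ESML2 x y z \<longleftrightarrow>
     (\<forall>i\<in>V. (\<Sum>l\<in>L i. x i l) = 1) \<and>
     (\<forall>i\<in>V. \<forall>l\<in>L i. x i l \<in> {0, 1}) \<and>
     (\<forall>i j l. {i, j} \<in> reduce_edges L ECL \<longrightarrow> l \<in> L i \<inter> L j \<longrightarrow> x i l + x j l \<le> 1) \<and>
     (\<forall>i j l. {i, j} \<in> reduce_edges L ESCL \<longrightarrow> l \<in> L i \<inter> L j \<longrightarrow> x i l + x j l \<le> 1 + y {i, j}) \<and>
     (\<forall>i j l. {i, j} \<in> ESML2 \<longrightarrow> l \<in> L i \<inter> L j \<longrightarrow> x i l - x j l \<le> z {i, j}) \<and>
     (\<forall>i j l. {i, j} \<in> ESML2 \<longrightarrow> l \<in> L i - L j \<longrightarrow> x i l \<le> z {i, j}) \<and>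
     (\<forall>e \<in> reduce_edges L ESCL. y e \<ge> 0) \<and>
     (\<forall>e \<in> ESML2. z e \<ge> 0)"

definition assigned :: "('a \<Rightarrow> nat set) \<Rightarrow> ('a \<Rightarrow> nat \<Rightarrow> real) \<Rightarrow> 'a \<Rightarrow> nat" where
  "assigned L x i = (THE l. l \<in> L i \<and> x i l = 1)"

end

theory Submission
  imports Defs
begin

lemma pairs_on_mem:
  assumes "{i, j} \<in> pairs_on V" shows "i \<in> V" "j \<in> V" "i \<noteq> j"
  using assms unfolding pairs_on_def by (auto simp: doubleton_eq_iff)

lemma list_col:
  assumes fin: "finite V" and E: "E \<subseteq> pairs_on V"
    and Lf: "\<forall>i\<in>V. finite (L i) \<and> deg E i < card (L i)"
  shows "\<exists>col. (\<forall>i\<in>V. col i \<in> L i) \<and> (\<forall>i j. {i, j} \<in> E \<longrightarrow> col i \<noteq> col j)"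
proof -
  have "\<forall>F. F \<subseteq> V \<longrightarrow> finite F \<longrightarrow> (\<exists>col. (\<forall>i\<in>F. col i \<in> L i) \<and>
        (\<forall>i j. i \<in> F \<longrightarrow> j \<in> F \<longrightarrow> {i, j} \<in> E \<longrightarrow> col i \<noteq> col j))"
  proof (intro allI impI)
    fix F :: "'a set" assume "F \<subseteq> V" "finite F"
    from \<open>finite F\<close> \<open>F \<subseteq> V\<close> show "\<exists>col. (\<forall>i\<in>F. col i \<in> L i) \<and>
        (\<forall>i j. i \<in> F \<longrightarrow> j \<in> F \<longrightarrow> {i, j} \<in> E \<longrightarrow> col i \<noteq> col j)"
    proof (induction F rule: finite_induct)
      case empty then show ?case by auto
    next
      case (insert a F)
      then obtain col where c1: "\<forall>i\<in>F. col i \<in> L i"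
        and c2: "\<forall>i j. i \<in> F \<longrightarrow> j \<in> F \<longrightarrow> {i, j} \<in> E \<longrightarrow> col i \<noteq> col j" by auto
      have aV: "a \<in> V" using insert by auto
      define N where "N = {j. {a, j} \<in> E}"
      have NV: "N \<subseteq> V"
      proof
        fix j assume "j \<in> N"
        then have "{a, j} \<in> pairs_on V" using E unfolding N_def by auto
        then show "j \<in> V" by (rule pairs_on_mem(2))
      qed
      have finN: "finite N" using NV fin finite_subset by blast
      have "card (col ` (N \<inter> F)) \<le> card (N \<inter> F)" using finN by (simp add: card_image_le)
      also have "\<dots> \<le> card N" using finN by (simp add: card_mono)
      also have "\<dots> < card (L a)" using Lf aV unfolding N_def deg_def by auto
      finally have lt: "card (col ` (N \<inter> F)) < card (L a)" .
      have "\<not> L a \<subseteq> col ` (N \<inter> F)"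
      proof
        assume "L a \<subseteq> col ` (N \<inter> F)"
        moreover have "finite (col ` (N \<inter> F))" using finN by simp
        ultimately have "card (L a) \<le> card (col ` (N \<inter> F))" by (rule card_mono[rotated])
        then show False using lt by simp
      qed
      then obtain l where l: "l \<in> L a" "l \<notin> col ` (N \<inter> F)" by auto
      show ?case
      proof (intro exI[of _ "col(a := l)"] conjI allI impI)
        show "\<forall>i\<in>insert a F. (col(a := l)) i \<in> L i" using c1 l by auto
      next
        fix i j assume ij: "i \<in> insert a F" "j \<in> insert a F" "{i, j} \<in> E"
        have "{i, j} \<in> pairs_on V" using ij(3) E by auto
        then have ne: "i \<noteq> j" by (rule pairs_on_mem(3))
        show "(col(a := l)) i \<noteq> (col(a := l)) j"
        proof (cases "i = a")
          case True
          then have "j \<in> F" "j \<in> N" using ij ne unfolding N_def by auto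
          then show ?thesis using True l ne by auto
        next
          case False
          note iF = this
          show ?thesis
          proof (cases "j = a")
            case True
            have "{a, i} = {i, j}" using True by auto
            then have "i \<in> F" "i \<in> N" using ij iF unfolding N_def by auto
            then show ?thesis using True l ne by auto
          next
            case False
            then show ?thesis using iF ij c2 by auto
          qed
        qed
      qed
    qed
  qed
  from this[rule_format, OF order_refl fin] obtain col where c1: "\<forall>i\<in>V. col i \<in> L i"
    and c2: "\<forall>i j. i \<in> V \<longrightarrow> j \<in> V \<longrightarrow> {i, j} \<in> E \<longrightarrow> col i \<noteq> col j"
    by blast
  have "\<forall>i j. {i, j} \<in> E \<longrightarrow> col i \<noteq> col j"
  proof (intro allI impI)
    fix i j assume "{i, j} \<in> E"
    then have "{i, j} \<in> pairs_on V" using E by blast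
    then have "i \<in> V" "j \<in> V" by (rule pairs_on_mem)+
    then show "col i \<noteq> col j" using c2 \<open>{i, j} \<in> E\<close> by blast
  qed
  then show ?thesis using c1 by blast
qed

theorem lemma1:
  fixes V :: "'a set" and k q :: nat and ECL ESCL ESML ESML2 :: "'a set set"
    and d :: "'a \<Rightarrow> nat \<Rightarrow> real" and L :: "'a \<Rightarrow> nat set"
  assumes "finite V" and "k \<ge> 1"
    and "ECL \<subseteq> pairs_on V" and "ESCL \<subseteq> pairs_on V" and "ESML \<subseteq> pairs_on V"
    and "ESML2 \<subseteq> ESML"
    and "\<forall>i\<in>V. \<forall>l\<in>{1..k}. d i l \<ge> 0"
    and "\<exists>c. (\<forall>i\<in>V. c i \<in> {1..k}) \<and> (\<forall>i j. {i, j} \<in> ECL \<longrightarrow> c i \<noteq> c j)"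
    and "min (1 + max_deg V ECL) k \<le> q" and "q \<le> k"
    and "\<forall>i\<in>V. L i \<subseteq> {1..k} \<and> (\<exists>S. nearest_q k q d i S \<and> S \<subseteq> L i)"
  shows "(\<exists>x y z. RMBLP_feasible V L ECL ESCL ESML2 x y z) \<and>
         (\<forall>x y z. RMBLP_feasible V L ECL ESCL ESML2 x y z \<longrightarrow>
            (\<forall>i\<in>V. assigned L x i \<in> L i \<and> x i (assigned L x i) = 1) \<and>
            (\<forall>i j. {i, j} \<in> ECL \<longrightarrow> assigned L x i \<noteq> assigned L x j))"
proof
  have Lfin: "\<forall>i\<in>V. finite (L i)" using assms(11) finite_subset by blast
  have cardL: "\<forall>i\<in>V. q \<le> card (L i)"
  proof
    fix i assume "i \<in> V"
    then obtain S where S: "nearest_q k q d i S" "S \<subseteq> L i" "L i \<subseteq> {1..k}" using assms(11) by blast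
    then show "q \<le> card (L i)" unfolding nearest_q_def
      using card_mono[of "L i" S] finite_subset[of "L i" "{1..k}"] by auto
  qed
  obtain col where col1: "\<forall>i\<in>V. col i \<in> L i"
    and col2: "\<forall>i j. {i, j} \<in> ECL \<longrightarrow> col i \<noteq> col j"
  proof (cases "k \<le> 1 + max_deg V ECL")
    case True
    then have qk: "q = k" using assms(9,10) by auto
    have "\<forall>i\<in>V. L i = {1..k}"
    proof
      fix i assume "i \<in> V"
      then have "L i \<subseteq> {1..k}" "k \<le> card (L i)" using assms(11) cardL qk by auto
      then show "L i = {1..k}" using card_subset_eq[of "{1..k}" "L i"] card_mono[of "{1..k}" "L i"] by fastforce
    qed
    then show ?thesis using that assms(8) by auto
  next
    case False
    then have q: "1 + max_deg V ECL \<le> q" using assms(9) by auto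
    have "\<forall>i\<in>V. finite (L i) \<and> deg ECL i < card (L i)"
    proof
      fix i assume i: "i \<in> V"
      have "deg ECL i \<le> max_deg V ECL" unfolding max_deg_def
        using i assms(1) by (intro Max_ge) auto
      then show "finite (L i) \<and> deg ECL i < card (L i)" using i Lfin cardL q by fastforce
    qed
    then show ?thesis using list_col[OF assms(1,3)] that by blast
  qed
  define x where "x = (\<lambda>i l. if l = col i then (1::real) else 0)"
  have "RMBLP_feasible V L ECL ESCL ESML2 x (\<lambda>_. 1) (\<lambda>_. 1)"
    unfolding RMBLP_feasible_def
  proof (intro conjI)
    show "\<forall>i\<in>V. (\<Sum>l\<in>L i. x i l) = 1"
      using col1 Lfin unfolding x_def by (simp add: sum.delta')
    show "\<forall>i j l. {i, j} \<in> reduce_edges L ECL \<longrightarrow> l \<in> L i \<inter> L j \<longrightarrow> x i l + x j l \<le> 1"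
    proof (intro allI impI)
      fix i j l assume "{i, j} \<in> reduce_edges L ECL" "l \<in> L i \<inter> L j"
      then have "col i \<noteq> col j" using col2 unfolding reduce_edges_def by blast
      then show "x i l + x j l \<le> 1" unfolding x_def by auto
    qed
  qed (auto simp: x_def)
  then show "\<exists>x y z. RMBLP_feasible V L ECL ESCL ESML2 x y z" by blast
next
  have Lfin: "\<forall>i\<in>V. finite (L i)" using assms(11) finite_subset by blast
  show "\<forall>x y z. RMBLP_feasible V L ECL ESCL ESML2 x y z \<longrightarrow>
            (\<forall>i\<in>V. assigned L x i \<in> L i \<and> x i (assigned L x i) = 1) \<and>
            (\<forall>i j. {i, j} \<in> ECL \<longrightarrow> assigned L x i \<noteq> assigned L x j)"
  proof (intro allI impI)
    fix x y z assume F: "RMBLP_feasible V L ECL ESCL ESML2 x y z"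
    have uniq: "\<exists>!l. l \<in> L i \<and> x i l = 1" if i: "i \<in> V" for i
    proof -
      have s: "(\<Sum>l\<in>L i. x i l) = 1" and b: "\<forall>l\<in>L i. x i l \<in> {0, 1}"
        using F i unfolding RMBLP_feasible_def by auto
      have fi: "finite (L i)" using Lfin i by auto
      have eq: "(\<Sum>l\<in>L i. x i l) = real (card {l \<in> L i. x i l = 1})"
      proof -
        have "(\<Sum>l\<in>L i. x i l) = (\<Sum>l\<in>L i. if x i l = 1 then 1 else 0)"
          using b by (intro sum.cong) auto
        also have "\<dots> = real (card {l \<in> L i. x i l = 1})"
          using fi by (simp add: sum.If_cases Int_def)
        finally show ?thesis .
      qed
      then have "card {l \<in> L i. x i l = 1} = 1" using s by simp
      then obtain l where "{l \<in> L i. x i l = 1} = {l}" using card_1_singletonE by blast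
      then show ?thesis by (auto simp: set_eq_iff)
    qed
    have asg: "assigned L x i \<in> L i \<and> x i (assigned L x i) = 1" if "i \<in> V" for i
      unfolding assigned_def using theI'[OF uniq[OF that]] .
    show "(\<forall>i\<in>V. assigned L x i \<in> L i \<and> x i (assigned L x i) = 1) \<and>
            (\<forall>i j. {i, j} \<in> ECL \<longrightarrow> assigned L x i \<noteq> assigned L x j)"
    proof (rule conjI)
      show "\<forall>i\<in>V. assigned L x i \<in> L i \<and> x i (assigned L x i) = 1" using asg by blast
    next
      show "\<forall>i j. {i, j} \<in> ECL \<longrightarrow> assigned L x i \<noteq> assigned L x j"
      proof (intro allI impI)
      fix i j assume e: "{i, j} \<in> ECL"
      then have pij: "{i, j} \<in> pairs_on V" using assms(3) by blast
      have ij: "i \<in> V" "j \<in> V" using pairs_on_mem(1,2)[OF pij] by auto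
      show "assigned L x i \<noteq> assigned L x j"
      proof
        assume eqa: "assigned L x i = assigned L x j"
        let ?l = "assigned L x i"
        have li: "?l \<in> L i" "x i ?l = 1" using asg ij by auto
        have lj: "?l \<in> L j" "x j ?l = 1" using asg[OF ij(2)] eqa by auto
        have "{i, j} \<in> reduce_edges L ECL"
          unfolding reduce_edges_def
        proof (intro CollectI conjI allI impI e)
          fix i' j' assume "{i, j} = {i', j'}"
          then have "{i', j'} = {i, j}" by simp
          then have "(i' = i \<and> j' = j) \<or> (i' = j \<and> j' = i)" by (simp add: doubleton_eq_iff)
          then show "L i' \<inter> L j' \<noteq> {}" using li lj by blast
        qed
        then have "x i ?l + x j ?l \<le> 1" using F li lj unfolding RMBLP_feasible_def by blast
        then show False using li lj by simp
      qed
    qed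
    qed
  qed
qed

end
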